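(* The $\sigma$-ideal $I_P$ is not generated by closed sets in the Baire topology on $(\omega+1)^\omega$: there is a Borel set $A\in I_P$ such that $A$ is not contained in any countable union of sets $F_n$, each closed in the Baire topology and each belonging to $I_P$.
   Context: The Cantor topology on $(\omega+1)^\omega$ is the product of the order topologies on $\omega+1$; the Baire topology is generated by the sets $[\sigma]=\{x:\sigma\subseteq x\}$, $\sigma\in(\omega+1)^{<\omega}$. $P:(\omega+1)^\omega\to\omega^\omega$ is given by $P(x)(n)=x(n)+1$ if $x(n)<\omega$, $P(x)(n)=0$ if $x(n)=\omega$. $I_P$ is the $\sigma$-ideal of sets $A\subseteq(\omega+1)^\omega$ that can be covered by countably many sets on each of which $P$ is continuous (w.r.t. the Cantor topology). An ideal $I$ is generated by closed sets if every Borel set in $I$ has an $F_\sigma$ superset in $I$. *)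

theory Defs
  imports "HOL-Analysis.Analysis"
begin

text \<open>The space (omega+1)^omega is modelled as nat \<Rightarrow> enat. Its standard topology
(type class instance: product of the order topologies on enat) is the Cantor topology.
The target omega^omega is nat \<Rightarrow> nat with the product of discrete topologies.\<close>

definition P :: "(nat \<Rightarrow> enat) \<Rightarrow> (nat \<Rightarrow> nat)" where
  "P x = (\<lambda>n. case x n of enat k \<Rightarrow> k + 1 | \<infinity> \<Rightarrow> 0)"

definition cyl :: "enat list \<Rightarrow> (nat \<Rightarrow> enat) set" where
  "cyl \<sigma> = {x. \<forall>i < length \<sigma>. x i = \<sigma> ! i}"

definition baire_top :: "(nat \<Rightarrow> enat) topology" where
  "baire_top = topology_generated_by (range cyl)"

definition in_IP :: "(nat \<Rightarrow> enat) set \<Rightarrow> bool" where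
  "in_IP A \<longleftrightarrow> (\<exists>C :: nat \<Rightarrow> (nat \<Rightarrow> enat) set.
      A \<subseteq> (\<Union>n. C n) \<and> (\<forall>n. continuous_on (C n) P))"

end

theory Submission
  imports Defs
begin

lemma proj_open: "open S \<Longrightarrow> open {x::nat\<Rightarrow>enat. x i \<in> S}"
proof -
  assume "open S"
  have "open ((\<lambda>x::nat\<Rightarrow>enat. x i) -` S \<inter> UNIV)"
    using continuous_on_open_vimage[OF open_UNIV, of "\<lambda>x::nat\<Rightarrow>enat. x i"] \<open>open S\<close>
    by simp
  thus ?thesis by (simp add: vimage_def)
qed

lemma proj_closed: "closed {x::nat\<Rightarrow>enat. x i = c}"
proof -
  have "closed ((\<lambda>x::nat\<Rightarrow>enat. x i) -` {c} \<inter> UNIV)"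
    using continuous_on_closed_vimage[OF closed_UNIV, of "\<lambda>x::nat\<Rightarrow>enat. x i"]
    by simp
  thus ?thesis by (simp add: vimage_def)
qed

lemma gen_open_prefix:
  "generate_topology_on (range cyl) U \<Longrightarrow> x \<in> U \<Longrightarrow> \<exists>N. \<forall>y. (\<forall>i<N. y i = x i) \<longrightarrow> y \<in> U"
proof (induction arbitrary: x rule: generate_topology_on.induct)
  case Empty then show ?case by simp
next
  case (Int a b)
  from Int.prems have "x \<in> a" "x \<in> b" by auto
  obtain N1 where N1: "\<forall>y. (\<forall>i<N1. y i = x i) \<longrightarrow> y \<in> a" using Int.IH(1)[OF \<open>x \<in> a\<close>] by blast
  obtain N2 where N2: "\<forall>y. (\<forall>i<N2. y i = x i) \<longrightarrow> y \<in> b" using Int.IH(2)[OF \<open>x \<in> b\<close>] by blast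
  show ?case
  proof (intro exI[of _ "max N1 N2"] allI impI)
    fix y assume "\<forall>i<max N1 N2. y i = x i"
    thus "y \<in> a \<inter> b" using N1 N2 by simp
  qed
next
  case (UN K)
  then obtain k where k: "k \<in> K" "x \<in> k" by blast
  obtain N where "\<forall>y. (\<forall>i<N. y i = x i) \<longrightarrow> y \<in> k" using UN.IH[OF k] by blast
  thus ?case using k(1) by blast
next
  case (Basis s)
  then obtain \<sigma> where s: "s = cyl \<sigma>" by blast
  show ?case using Basis s by (intro exI[of _ "length \<sigma>"]) (auto simp: cyl_def)
qed

lemma baire_closed:
  assumes "closedin baire_top F" "\<And>N. \<exists>y\<in>F. \<forall>i<N. y i = x i"
  shows "x \<in> F"
proof (rule ccontr)
  assume nx: "x \<notin> F"
  have "openin baire_top (topspace baire_top - F)" using assms(1) closedin_def by blast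
  hence g: "generate_topology_on (range cyl) (topspace baire_top - F)"
    unfolding baire_top_def using openin_topology_generated_by by blast
  have "x \<in> topspace baire_top"
    unfolding baire_top_def topology_generated_by_topspace
  proof (rule UnionI[of "cyl []"])
    show "cyl [] \<in> range cyl" by (rule rangeI)
  qed (simp add: cyl_def)
  with nx obtain N where N: "\<forall>y. (\<forall>i<N. y i = x i) \<longrightarrow> y \<in> topspace baire_top - F"
    using gen_open_prefix[OF g] by blast
  from assms(2)[of N] obtain y where "y \<in> F" "\<forall>i<N. y i = x i" by blast
  with N show False by blast
qed

lemma cont_box:
  assumes "continuous_on C P" "x \<in> C"
  shows "\<exists>U. finite {i. U i \<noteq> UNIV} \<and> (\<forall>i. open (U i)) \<and> (\<forall>i. x i \<in> U i) \<and>
     (\<forall>y\<in>C. (\<forall>i. y i \<in> U i) \<longrightarrow> P y K = P x K)"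
proof -
  have "continuous_on C (\<lambda>y. P y K)"
    using continuous_on_product_then_coordinatewise[OF assms(1)] .
  then obtain A where A: "open A" "x \<in> A" "\<forall>y\<in>C. y \<in> A \<longrightarrow> P y K \<in> {P x K}"
    using assms(2) unfolding continuous_on_topological
    by (metis open_discrete singletonI)
  from A(1) have "openin (product_topology (\<lambda>i. euclidean) UNIV) A" by (simp add: open_fun_def)
  then obtain U where U: "finite {i \<in> UNIV. U i \<noteq> topspace euclidean}"
     "\<forall>i\<in>UNIV. openin euclidean (U i)" "x \<in> Pi\<^sub>E UNIV U" "Pi\<^sub>E UNIV U \<subseteq> A"
    unfolding openin_product_topology_alt using A(2) by blast
  show ?thesis
  proof (intro exI[of _ U] conjI allI ballI impI)
    show "finite {i. U i \<noteq> UNIV}" using U(1) by simp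
    show "open (U i)" for i using U(2) by simp
    show "x i \<in> U i" for i using U(3) by auto
    fix y assume "y \<in> C" "\<forall>i. y i \<in> U i"
    hence "y \<in> A" using U(4) by auto
    thus "P y K = P x K" using A(3) \<open>y \<in> C\<close> by simp
  qed
qed

definition ev :: "enat \<Rightarrow> bool" where "ev v \<longleftrightarrow> v = \<infinity> \<or> (\<exists>k. v = enat (2*k))"
definition D :: "enat list \<Rightarrow> (nat \<Rightarrow> enat) set" where
  "D s = {x. (\<forall>i<length s. x i = s!i) \<and> (\<forall>i\<ge>length s. ev (x i))}"
definition ext :: "enat list \<Rightarrow> enat list \<Rightarrow> bool" where
  "ext s t \<longleftrightarrow> take (length s) t = s \<and> length s \<le> length t \<and> (\<forall>i. length s \<le> i \<and> i < length t \<longrightarrow> ev (t!i))"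

lemma ext_trans: "ext a b \<Longrightarrow> ext b c \<Longrightarrow> ext a c"
  unfolding ext_def
proof (intro conjI allI impI)
  assume ab: "take (length a) b = a \<and> length a \<le> length b \<and> (\<forall>i. length a \<le> i \<and> i < length b \<longrightarrow> ev (b ! i))"
    and bc: "take (length b) c = b \<and> length b \<le> length c \<and> (\<forall>i. length b \<le> i \<and> i < length c \<longrightarrow> ev (c ! i))"
  show "take (length a) c = a"
    using ab bc by (metis min.absorb1 take_take)
  show "length a \<le> length c" using ab bc by simp
  fix i assume i: "length a \<le> i \<and> i < length c"
  show "ev (c ! i)"
  proof (cases "i < length b")
    case True
    hence "c ! i = b ! i" using bc by (metis nth_take)
    then show ?thesis using ab i True by simp
  next
    case False then show ?thesis using bc i by simp
  qed
qed

lemma escape: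
  assumes "continuous_on C P"
  shows "\<exists>t. ext s t \<and> length s < length t \<and> D t \<inter> C = {}"
proof (cases "\<exists>t. ext s t \<and> length s < length t \<and> D t \<inter> C = {}")
  case True then show ?thesis .
next
  case False
  hence dense: "\<And>t. ext s t \<Longrightarrow> length s < length t \<Longrightarrow> \<exists>y. y \<in> D t \<and> y \<in> C" by blast
  define K where "K = length s"
  define t0 where "t0 = s @ [\<infinity>]"
  have ext0: "ext s t0" "length s < length t0"
    unfolding ext_def t0_def by (auto simp: ev_def nth_append)
  have "D t0 \<inter> C = {}"
  proof (rule ccontr)
    assume "D t0 \<inter> C \<noteq> {}"
    then obtain x where x: "x \<in> D t0" "x \<in> C" by blast
    have xK: "x K = \<infinity>" using x(1) unfolding D_def t0_def K_def by auto
    have xev: "\<And>i. i > K \<Longrightarrow> ev (x i)" using x(1) unfolding D_def t0_def K_def by auto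
    have xs: "\<And>i. i < K \<Longrightarrow> x i = s ! i" using x(1) unfolding D_def t0_def K_def by (auto simp: nth_append)
    obtain U where U: "finite {i. U i \<noteq> UNIV}" "\<And>i. open (U i)" "\<And>i. x i \<in> U i"
      "\<And>y. y \<in> C \<Longrightarrow> (\<forall>i. y i \<in> U i) \<Longrightarrow> P y K = P x K"
      using cont_box[OF assms x(2), of K] by blast
    have "\<infinity> \<in> U K" using U(3)[of K] xK by simp
    then obtain m where m: "{enat m<..} \<subseteq> U K" using U(2)[of K] open_enat_iff by blast
    define N where "N = Suc (Max ({i. U i \<noteq> UNIV} \<union> {K}))"
    have N: "\<And>i. U i \<noteq> UNIV \<Longrightarrow> i < N" "K < N"
      unfolding N_def using U(1) by (auto simp: le_imp_less_Suc)
    define t' where "t' = map (\<lambda>i. if i = K then enat (2*m+2) else x i) [0..<N]"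
    have "ext s t'"
      unfolding ext_def
    proof (intro conjI allI impI)
      show "take (length s) t' = s"
        by (rule nth_equalityI) (use N(2) in \<open>auto simp: t'_def K_def xs\<close>)
      show "length s \<le> length t'" using N(2) by (simp add: t'_def K_def)
      fix i assume i: "length s \<le> i \<and> i < length t'"
      hence iN: "i < N" by (simp add: t'_def)
      show "ev (t' ! i)"
      proof (cases "i = K")
        case True
        hence "t' ! i = enat (2*(Suc m))" using iN by (simp add: t'_def)
        then show ?thesis unfolding ev_def by blast
      next
        case False
        hence "i > K" using i K_def by simp
        then show ?thesis using xev[of i] iN False by (simp add: t'_def)
      qed
    qed
    moreover have "length s < length t'" using N(2) by (simp add: t'_def K_def)
    ultimately obtain y where y: "y \<in> D t'" "y \<in> C" using dense by blast
    have yt: "\<And>i. i < N \<Longrightarrow> y i = t' ! i" using y(1) unfolding D_def t'_def by auto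
    have "\<forall>i. y i \<in> U i"
    proof
      fix i show "y i \<in> U i"
      proof (cases "U i = UNIV")
        case False
        hence "i < N" using N by blast
        then show ?thesis
        proof (cases "i = K")
          case True
          then have "y i = enat (2*m+2)" using yt[OF \<open>i<N\<close>] True N(2) by (simp add: t'_def)
          then show ?thesis using m True by auto
        next
          case False
          then show ?thesis using yt[OF \<open>i<N\<close>] U(3)[of i] by (simp add: t'_def \<open>i<N\<close>)
        qed
      qed simp
    qed
    hence "P y K = P x K" using U(4) y(2) by blast
    moreover have "y K = enat (2*m+2)" using yt[OF N(2)] by (simp add: t'_def N(2))
    ultimately show False using xK by (simp add: P_def)
  qed
  with ext0 show ?thesis by blast
qed

lemma chain_take:
  fixes s :: "nat \<Rightarrow> 'a list"
  assumes "\<And>j. take (length (s j)) (s (Suc j)) = s j" "\<And>j. length (s j) \<le> length (s (Suc j))"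
  shows "j \<le> j' \<Longrightarrow> take (length (s j)) (s j') = s j \<and> length (s j) \<le> length (s j')"
proof (induction j' rule: dec_induct)
  case base then show ?case by simp
next
  case (step k)
  have "take (length (s j)) (s (Suc k)) = take (length (s j)) (take (length (s k)) (s (Suc k)))"
    using step.IH by (simp add: min.absorb1)
  also have "\<dots> = s j" using assms(1)[of k] step.IH by simp
  finally show ?case using step.IH assms(2)[of k] by simp
qed

lemma chain_limit:
  fixes s :: "nat \<Rightarrow> 'a list"
  assumes "\<And>j. take (length (s j)) (s (Suc j)) = s j" "\<And>j. length (s j) < length (s (Suc j))"
  shows "\<exists>x. \<forall>j i. i < length (s j) \<longrightarrow> x i = s j ! i"
proof -
  have len: "j \<le> length (s j)" for j
    by (induction j) (auto simp: Suc_le_eq intro: le_less_trans assms(2))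
  have ct: "j \<le> j' \<Longrightarrow> take (length (s j)) (s j') = s j" for j j'
  proof -
    have le: "\<And>j. length (s j) \<le> length (s (Suc j))" using assms(2) less_imp_le by blast
    show "j \<le> j' \<Longrightarrow> take (length (s j)) (s j') = s j"
      using chain_take[of s, OF assms(1) le] by blast
  qed
  have eq: "i < length (s j) \<Longrightarrow> j \<le> j' \<Longrightarrow> s j ! i = s j' ! i" for i j j'
    using ct[of j j'] by (metis nth_take)
  show ?thesis
  proof (intro exI allI impI)
    fix j i assume i: "i < length (s j)"
    have "i < length (s (Suc i))" using len[of "Suc i"] by simp
    hence "s (Suc i) ! i = s (max j (Suc i)) ! i" by (intro eq) auto
    also have "\<dots> = s j ! i" using eq[OF i, of "max j (Suc i)"] by simp
    finally show "s (Suc i) ! i = s j ! i" .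
  qed
qed

lemma len_grow: "(\<And>j. length ((s::nat \<Rightarrow> 'a list) j) < length (s (Suc j))) \<Longrightarrow> j \<le> length (s j)"
  by (induction j) (auto simp: Suc_le_eq intro: le_less_trans)

lemma notIP:
  fixes C :: "nat \<Rightarrow> (nat \<Rightarrow> enat) set"
  assumes "D s \<subseteq> (\<Union>j. C j)" "\<And>j. continuous_on (C j) P"
  shows False
proof -
  define st where "st = rec_nat s (\<lambda>j t. SOME t'. ext t t' \<and> length t < length t' \<and> D t' \<inter> C j = {})"
  have st0: "st 0 = s" by (simp add: st_def)
  have stS: "ext (st j) (st (Suc j)) \<and> length (st j) < length (st (Suc j)) \<and> D (st (Suc j)) \<inter> C j = {}" for j
  proof -
    have "st (Suc j) = (SOME t'. ext (st j) t' \<and> length (st j) < length t' \<and> D t' \<inter> C j = {})"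
      by (simp add: st_def)
    thus ?thesis using someI_ex[OF escape[OF assms(2)[of j], of "st j"]] by simp
  qed
  have extmono: "j \<le> j' \<Longrightarrow> ext (st j) (st j')" for j j'
  proof (induction j' rule: dec_induct)
    case base then show ?case by (auto simp: ext_def)
  next
    case (step k) then show ?case using stS[of k] ext_trans by blast
  qed
  obtain x where x: "\<And>j i. i < length (st j) \<Longrightarrow> x i = st j ! i"
    using chain_limit[of st] stS unfolding ext_def by blast
  have len: "j \<le> length (st j)" for j using len_grow[of st j] stS by blast
  have inD: "x \<in> D (st j)" for j
    unfolding D_def
  proof (intro CollectI conjI allI impI)
    fix i assume "i < length (st j)" then show "x i = st j ! i" by (rule x)
  next
    fix i assume i: "length (st j) \<le> i"
    have il: "i < length (st (Suc i))" using len[of "Suc i"] by simp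
    have "ext (st j) (st (max j (Suc i)))" by (rule extmono) simp
    moreover have "i < length (st (max j (Suc i)))"
      using il extmono[of "Suc i" "max j (Suc i)"] unfolding ext_def by auto
    ultimately have "ev (st (max j (Suc i)) ! i)" using i unfolding ext_def by blast
    moreover have "x i = st (max j (Suc i)) ! i"
      by (rule x) fact
    ultimately show "ev (x i)" by simp
  qed
  from inD[of 0] st0 assms(1) obtain j where "x \<in> C j" by blast
  with inD[of "Suc j"] stS[of j] show False by blast
qed

definition good :: "enat list \<Rightarrow> bool" where
  "good s \<longleftrightarrow> (\<forall>m<length s. \<forall>n<m. s!m = enat (2*n+1) \<longrightarrow> s!n = \<infinity>)"

lemma escape2:
  fixes C :: "nat \<Rightarrow> (nat \<Rightarrow> enat) set"
  assumes "good s" "closedin baire_top F" "F \<subseteq> (\<Union>j. C j)" "\<And>j. continuous_on (C j) P"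
  shows "\<exists>t. take (length s) t = s \<and> length s < length t \<and> good t \<and> (\<forall>y. (\<forall>i<length t. y i = t!i) \<longrightarrow> y \<notin> F)"
proof (rule ccontr)
  assume H: "\<not> ?thesis"
  have "D s \<subseteq> F"
  proof
    fix x assume x: "x \<in> D s"
    show "x \<in> F"
    proof (rule baire_closed[OF assms(2)])
      fix N
      define t where "t = map x [0..<max N (Suc (length s))]"
      have "take (length s) t = s"
        by (rule nth_equalityI) (use x in \<open>auto simp: t_def D_def\<close>)
      moreover have "length s < length t" by (simp add: t_def)
      moreover have "good t"
        unfolding good_def
      proof (intro allI impI)
        fix m n assume m: "m < length t" and n: "n < m" and tm: "t ! m = enat (2*n+1)"
        have xm: "x m = enat (2*n+1)" using tm m by (simp add: t_def)
        show "t ! n = \<infinity>"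
        proof (cases "m < length s")
          case True
          hence "s ! m = enat (2*n+1)" using xm x by (simp add: D_def)
          hence "s ! n = \<infinity>" using assms(1) True n unfolding good_def by blast
          then show ?thesis using x True n m by (simp add: t_def D_def)
        next
          case False
          hence "ev (x m)" using x by (simp add: D_def)
          with xm have False unfolding ev_def by (auto simp: enat.inject) presburger
          then show ?thesis ..
        qed
      qed
      ultimately obtain y where y: "\<forall>i<length t. y i = t!i" "y \<in> F" using H by blast
      show "\<exists>y\<in>F. \<forall>i<N. y i = x i"
        using y by (intro bexI[of _ y]) (auto simp: t_def)
    qed
  qed
  then show False using notIP[of s C] assms(3,4) by blast
qed

definition wit :: "enat list \<Rightarrow> enat list" where
  "wit s = s @ map (\<lambda>n. if s!n = \<infinity> then enat (2*n+1) else 0) [0..<length s]"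

lemma wit_good: assumes "good s" shows "good (wit s)"
  unfolding good_def
proof (intro allI impI)
  fix m n assume m: "m < length (wit s)" and n: "n < m" and wm: "wit s ! m = enat (2*n+1)"
  show "wit s ! n = \<infinity>"
  proof (cases "m < length s")
    case True
    then show ?thesis using assms n wm unfolding good_def wit_def by (auto simp: nth_append)
  next
    case False
    define n' where "n' = m - length s"
    have n'l: "n' < length s" using m False by (simp add: wit_def n'_def)
    have "wit s ! m = (if s!n' = \<infinity> then enat (2*n'+1) else 0)"
      using False n'l by (simp add: wit_def nth_append n'_def)
    with wm have "s!n' = \<infinity>" "n' = n" by (auto split: if_splits simp: zero_enat_def)
    then show ?thesis using n'l by (simp add: wit_def nth_append)
  qed
qed

lemma wit_prop: "n < length s \<Longrightarrow> s!n = \<infinity> \<Longrightarrow> wit s ! (length s + n) = enat (2*n+1) \<and> length s + n < length (wit s)"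
  by (simp add: wit_def nth_append)

definition AA :: "(nat \<Rightarrow> enat) set" where
  "AA = {x. (\<forall>m n. n < m \<longrightarrow> x m = enat (2*n+1) \<longrightarrow> x n = \<infinity>) \<and> (\<forall>n. x n = \<infinity> \<longrightarrow> (\<exists>m. n < m \<and> x m = enat (2*n+1)))}"

lemma AA_borel: "AA \<in> sets borel"
proof -
  have b: "\<And>i c. {x \<in> space borel. (x::nat\<Rightarrow>enat) i = c} \<in> sets borel"
    using proj_closed by (simp add: borel_closed)
  have "{x \<in> space borel. (\<forall>m n. n < m \<longrightarrow> x m = enat (2*n+1) \<longrightarrow> x n = \<infinity>) \<and> (\<forall>n. x n = \<infinity> \<longrightarrow> (\<exists>m. n < m \<and> x m = enat (2*n+1)))} \<in> sets borel"
    by (intro sets.sets_Collect_conj sets.sets_Collect_countable_All sets.sets_Collect_imp sets.sets_Collect_countable_Ex sets.sets_Collect_const b)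
  thus ?thesis unfolding AA_def by simp
qed

lemma AA_cont: "continuous_on AA P"
proof (rule continuous_on_coordinatewise_then_product)
  fix n
  show "continuous_on AA (\<lambda>x. P x n)"
    unfolding continuous_on_topological
  proof (intro ballI allI impI)
    fix x B assume x: "x \<in> AA" and B: "open B" "P x n \<in> B"
    show "\<exists>A. open A \<and> x \<in> A \<and> (\<forall>y\<in>AA. y \<in> A \<longrightarrow> P y n \<in> B)"
    proof (cases "x n")
      case (enat k)
      show ?thesis
      proof (rule exI[of _ "{y. y n \<in> {enat k}}"], intro conjI ballI impI)
        show "open {y::nat\<Rightarrow>enat. y n \<in> {enat k}}" by (intro proj_open open_enat)
        show "x \<in> {y. y n \<in> {enat k}}" using enat by simp
        fix y assume "y \<in> {y. y n \<in> {enat k}}"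
        thus "P y n \<in> B" using B enat by (simp add: P_def)
      qed
    next
      case infinity
      then obtain m where m: "n < m" "x m = enat (2*n+1)" using x unfolding AA_def by blast
      show ?thesis
      proof (rule exI[of _ "{y. y m \<in> {enat (2*n+1)}}"], intro conjI ballI impI)
        show "open {y::nat\<Rightarrow>enat. y m \<in> {enat (2 * n + 1)}}" by (intro proj_open open_enat)
        show "x \<in> {y. y m \<in> {enat (2 * n + 1)}}" using m by simp
        fix y assume "y \<in> AA" "y \<in> {y. y m \<in> {enat (2 * n + 1)}}"
        hence "y n = \<infinity>" using m(1) unfolding AA_def by auto
        thus "P y n \<in> B" using B infinity by (simp add: P_def)
      qed
    qed
  qed
qed

theorem mainTheorem8:
  shows "\<exists>A :: (nat \<Rightarrow> enat) set. A \<in> sets borel \<and> in_IP A \<and>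
     \<not> (\<exists>F :: nat \<Rightarrow> (nat \<Rightarrow> enat) set.
           (\<forall>n. closedin baire_top (F n) \<and> in_IP (F n)) \<and> A \<subseteq> (\<Union>n. F n))"
proof (intro exI[of _ AA] conjI notI)
  show "AA \<in> sets borel" by (rule AA_borel)
  show "in_IP AA" unfolding in_IP_def using AA_cont by (intro exI[of _ "\<lambda>_. AA"]) auto
  assume "\<exists>F :: nat \<Rightarrow> (nat \<Rightarrow> enat) set.
           (\<forall>n. closedin baire_top (F n) \<and> in_IP (F n)) \<and> AA \<subseteq> (\<Union>n. F n)"
  then obtain F :: "nat \<Rightarrow> (nat \<Rightarrow> enat) set" where
    F: "\<And>n. closedin baire_top (F n)" "\<And>n. in_IP (F n)" "AA \<subseteq> (\<Union>n. F n)" by blast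
  have "\<forall>k. \<exists>Ck :: nat \<Rightarrow> (nat \<Rightarrow> enat) set. F k \<subseteq> (\<Union>j. Ck j) \<and> (\<forall>j. continuous_on (Ck j) P)"
    using F(2) unfolding in_IP_def by blast
  then obtain C :: "nat \<Rightarrow> nat \<Rightarrow> (nat \<Rightarrow> enat) set" where
    C: "\<And>k. F k \<subseteq> (\<Union>j. C k j)" "\<And>k j. continuous_on (C k j) P" by metis
  define Q where "Q = (\<lambda>k t t'. take (length (wit t)) t' = wit t \<and> length (wit t) < length t' \<and> good t' \<and>
      (\<forall>y. (\<forall>i<length t'. y i = t'!i) \<longrightarrow> y \<notin> F k))"
  define st where "st = rec_nat [] (\<lambda>k t. SOME t'. Q k t t')"
  have st0: "st 0 = []" by (simp add: st_def)
  have stS: "good (st k) \<and> Q k (st k) (st (Suc k))" for k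
  proof (induction k)
    case 0
    have g: "good (st 0)" by (simp add: st0 good_def)
    have "\<exists>t'. Q 0 (st 0) t'" unfolding Q_def
      using escape2[OF wit_good[OF g] F(1) C(1) C(2)] by blast
    then show ?case using g someI_ex by (simp add: st_def)
  next
    case (Suc k)
    have g: "good (st (Suc k))" using Suc.IH unfolding Q_def by blast
    have "\<exists>t'. Q (Suc k) (st (Suc k)) t'" unfolding Q_def
      using escape2[OF wit_good[OF g] F(1) C(1) C(2)] by blast
    hence "Q (Suc k) (st (Suc k)) (SOME t'. Q (Suc k) (st (Suc k)) t')" by (rule someI_ex)
    then show ?case using g by (simp add: st_def)
  qed
  have wlen: "length t \<le> length (wit t)" for t by (simp add: wit_def)
  have wtake: "take (length t) (wit t) = t" for t by (simp add: wit_def)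
  have chain1: "take (length (st k)) (st (Suc k)) = st k" for k
  proof -
    have q: "take (length (wit (st k))) (st (Suc k)) = wit (st k)" using stS[of k] unfolding Q_def by blast
    have "take (length (st k)) (st (Suc k)) = take (length (st k)) (take (length (wit (st k))) (st (Suc k)))"
      using wlen[of "st k"] by (simp add: min.absorb1)
    also have "\<dots> = st k" using q wtake by simp
    finally show ?thesis .
  qed
  have chain2: "length (st k) < length (st (Suc k))" for k
    using stS[of k] wlen[of "st k"] unfolding Q_def by auto
  obtain x where x: "\<And>j i. i < length (st j) \<Longrightarrow> x i = st j ! i"
    using chain_limit[of st, OF chain1 chain2] by blast
  have len: "j \<le> length (st j)" for j using len_grow[of st j] chain2 by blast
  have "x \<in> AA"
    unfolding AA_def
  proof (intro CollectI conjI allI impI)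
    fix m n assume n: "n < m" and xm: "x m = enat (2*n+1)"
    have ml: "m < length (st (Suc m))" using len[of "Suc m"] by simp
    have "good (st (Suc m))" using stS by blast
    moreover have "st (Suc m) ! m = enat (2*n+1)" using x[OF ml] xm by simp
    ultimately have "st (Suc m) ! n = \<infinity>" using ml n unfolding good_def by blast
    thus "x n = \<infinity>" using x[of n "Suc m"] ml n by simp
  next
    fix n assume xn: "x n = \<infinity>"
    define j where "j = Suc n"
    have nl: "n < length (st j)" using len[of j] by (simp add: j_def)
    have sn: "st j ! n = \<infinity>" using x[OF nl] xn by simp
    from wit_prop[OF nl sn] have w: "wit (st j) ! (length (st j) + n) = enat (2*n+1)"
       "length (st j) + n < length (wit (st j))" by blast+
    have q: "take (length (wit (st j))) (st (Suc j)) = wit (st j)" "length (wit (st j)) < length (st (Suc j))"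
      using stS[of j] unfolding Q_def by blast+
    have "st (Suc j) ! (length (st j) + n) = enat (2*n+1)"
      using w q by (metis nth_take)
    moreover have "length (st j) + n < length (st (Suc j))" using w(2) q(2) by simp
    ultimately have "x (length (st j) + n) = enat (2*n+1)" using x by simp
    moreover have "n < length (st j) + n" using nl by linarith
    ultimately show "\<exists>m. n < m \<and> x m = enat (2*n+1)" by blast
  qed
  then obtain k where "x \<in> F k" using F(3) by blast
  moreover have "\<forall>i<length (st (Suc k)). x i = st (Suc k) ! i" using x by blast
  ultimately show False using stS[of k] unfolding Q_def by blast
qed

end
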